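(* Let $\mu\in[0,1]$, $A\in\mathbb R^{q\times n}$ of full row rank, $b\in\mathbb R^q$, $\gamma>0$, $\delta\in(0,\|b\|_{LL_2,\gamma})$, $g(x):=\|Ax-b\|_{LL_2,\gamma}-\delta$ and $F(x):=\|x\|_1-\mu\|x\|+\delta_{\{g\le0\}}(x)$. Then: (i) MFCQ holds at every feasible point, i.e., for every $x$ with $g(x)\le0$ and $g(x)=0$ one has $\nabla g(x)\neq0$; (ii) if $\mu\in[0,1)$, $F$ is level-bounded; (iii) if $\mu=1$ and $A$ has no zero columns, $F$ is level-bounded.
   Context: For $y\in\mathbb R^q$, the Lorentzian norm is $\|y\|_{LL_2,\gamma}:=\sum_{i=1}^q\log\big(1+y_i^2/\gamma^2\big)$. $\|\cdot\|_1$ is the $\ell_1$ norm and $\|\cdot\|$ the Euclidean norm; $\delta_C$ is the indicator function of $C$. For a single smooth constraint $g\le0$, MFCQ at a feasible $x$ means: if $g(x)=0$ there exists $d$ with $\langle\nabla g(x),d\rangle<0$, equivalently $\nabla g(x)\ne0$. A function is level-bounded if all its sublevel sets are bounded. *)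

theory Defs
  imports "HOL-Analysis.Analysis"
begin

definition LL2 :: "real \<Rightarrow> real^'q \<Rightarrow> real" where
  "LL2 \<gamma> y = (\<Sum>i\<in>UNIV. ln (1 + (y $ i)^2 / \<gamma>^2))"

definition l1norm :: "real^'n \<Rightarrow> real" where
  "l1norm x = (\<Sum>i\<in>UNIV. \<bar>x $ i\<bar>)"

definition indicator_fun :: "'a set \<Rightarrow> 'a \<Rightarrow> ereal" where
  "indicator_fun C x = (if x \<in> C then 0 else \<infinity>)"

definition level_bounded :: "('a::metric_space \<Rightarrow> ereal) \<Rightarrow> bool" where
  "level_bounded F \<longleftrightarrow> (\<forall>\<alpha>::real. bounded {x. F x \<le> ereal \<alpha>})"

end

theory Submission imports Defs begin

lemma real_key:
  fixes a s t \<alpha> M :: real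
  assumes "a \<ge> 0" "s \<ge> 0" "\<alpha> \<ge> 0" "M \<ge> 0" "s \<le> M * a" "t \<ge> 0" "t^2 = a^2 + s^2"
    "a + s - t \<le> \<alpha>"
  shows "s \<le> (M + 1) * \<alpha>"
proof (cases "a + s - \<alpha> \<le> 0")
  case True
  have "M * \<alpha> \<ge> 0" using assms by simp
  then show ?thesis using True assms unfolding distrib_right mult_1_left by linarith
next
  case False
  then have "(a + s - \<alpha>)^2 \<le> t^2" using assms by (intro power_mono) auto
  moreover have "(a + s - \<alpha>)^2 = a^2 + s^2 + \<alpha>*\<alpha> + 2*(a * s) - 2*(\<alpha>*a) - 2*(\<alpha> * s)"
    by (simp add: power2_eq_square algebra_simps)
  moreover have "\<alpha>*\<alpha> \<ge> 0" by simp
  ultimately have h: "a * s \<le> \<alpha> * a + \<alpha> * s" using assms by linarith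
  have "\<alpha> * s \<le> \<alpha> * (M * a)" using assms by (intro mult_left_mono) auto
  then have h2: "a * s \<le> a * ((M + 1) * \<alpha>)" using h by (simp add: algebra_simps)
  show ?thesis
  proof (cases "a = 0")
    case True then show ?thesis using assms by simp
  next
    case False
    then have ap: "a > 0" using assms by simp
    show ?thesis using h2 ap by (simp add: mult_le_cancel_left_pos)
  qed
qed

lemma split_sum:
  fixes x :: "real^'n" and f :: "real \<Rightarrow> real"
  assumes "f 0 = 0"
  shows "(\<Sum>j\<in>UNIV. f (x$j)) = f (x$k) + (\<Sum>j\<in>UNIV. f ((\<chi> j. if j = k then 0 else x$j)$j))"
proof -
  have "(\<Sum>j\<in>UNIV. f (x$j)) = (\<Sum>j\<in>UNIV. f ((\<chi> j. if j = k then 0 else x$j)$j) + (if j = k then f (x$k) else 0))"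
    by (rule sum.cong) (auto simp: assms)
  also have "\<dots> = f (x$k) + (\<Sum>j\<in>UNIV. f ((\<chi> j. if j = k then 0 else x$j)$j))"
    by (simp add: sum.distrib)
  finally show ?thesis .
qed

lemma sparse_bound:
  fixes A :: "real^'n^'q" and R \<alpha> :: real
  assumes cols: "\<forall>j. column j A \<noteq> 0"
  shows "\<exists>K. \<forall>x. norm (A *v x) \<le> R \<and> l1norm x - norm x \<le> \<alpha> \<longrightarrow> norm x \<le> K"
proof -
  obtain B where Bpos: "B > 0" and Bb: "\<And>y. norm (A *v y) \<le> B * norm y"
    using linear_bounded_pos[OF matrix_vector_mul_linear[of A]] by blast
  define c where "c = Min (range (\<lambda>j. norm (column j A)))"
  have cin: "c \<in> range (\<lambda>j. norm (column j A))" unfolding c_def by (intro Min_in) auto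
  then have cpos: "c > 0" using cols by auto
  have cle: "\<And>j. c \<le> norm (column j A)" unfolding c_def by (intro Min_le) auto
  define N where "N = real CARD('n)"
  have N0: "N \<ge> 0" unfolding N_def by simp
  define K where "K = (R + B * ((N + 1) * \<alpha>)) / c + (N + 1) * \<alpha>"
  show ?thesis
  proof (intro exI allI impI)
    fix x :: "real^'n"
    assume hx: "norm (A *v x) \<le> R \<and> l1norm x - norm x \<le> \<alpha>"
    have l1ge: "norm x \<le> l1norm x" unfolding l1norm_def by (rule norm_le_l1_cart)
    then have a0: "\<alpha> \<ge> 0" using hx by linarith
    obtain k where kmax: "\<And>j. \<bar>x$j\<bar> \<le> \<bar>x$k\<bar>"
    proof -
      have "Max (range (\<lambda>j. \<bar>x$j\<bar>)) \<in> range (\<lambda>j. \<bar>x$j\<bar>)" by (intro Min_in Max_in) auto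
      then obtain k where "Max (range (\<lambda>j. \<bar>x$j\<bar>)) = \<bar>x$k\<bar>" by (metis rangeE)
      moreover have "\<And>j. \<bar>x$j\<bar> \<le> Max (range (\<lambda>j. \<bar>x$j\<bar>))" by (intro Max_ge) auto
      ultimately show ?thesis using that by metis
    qed
    define y where "y = (\<chi> j. if j = k then 0 else x$j)"
    define a where "a = \<bar>x$k\<bar>"
    define s where "s = l1norm y"
    have l1: "l1norm x = a + s"
      unfolding l1norm_def s_def a_def y_def by (rule split_sum) simp
    have "(norm x)^2 = (\<Sum>j\<in>UNIV. x$j * x$j)"
      by (simp add: power2_norm_eq_inner inner_vec_def)
    also have "\<dots> = x$k * x$k + (\<Sum>j\<in>UNIV. y$j * y$j)"
      unfolding y_def by (rule split_sum[where f = "\<lambda>t. t * t"]) simp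
    also have "(\<Sum>j\<in>UNIV. y$j * y$j) = (norm y)^2"
      by (simp add: power2_norm_eq_inner inner_vec_def)
    finally have nx2: "(norm x)^2 = a^2 + (norm y)^2" unfolding a_def by (simp add: power2_eq_square)
    have ny: "norm y \<le> s" unfolding s_def l1norm_def by (rule norm_le_l1_cart)
    have s0: "s \<ge> 0" unfolding s_def l1norm_def by (simp add: sum_nonneg)
    have a0': "a \<ge> 0" unfolding a_def by simp
    define t where "t = sqrt (a^2 + s^2)"
    have "(norm x)^2 \<le> a^2 + s^2" using nx2 ny by (simp add: power_mono)
    then have nt: "norm x \<le> t" unfolding t_def by (rule real_le_rsqrt)
    have t0: "t \<ge> 0" and t2: "t^2 = a^2 + s^2" unfolding t_def by simp_all
    have sNa: "s \<le> N * a"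
    proof -
      have "s \<le> (\<Sum>j\<in>(UNIV::'n set). a)" unfolding s_def l1norm_def
      proof (rule sum_mono)
        fix j :: 'n
        show "\<bar>y $ j\<bar> \<le> a" using kmax[of j] by (auto simp: y_def a_def)
      qed
      then show ?thesis by (simp add: N_def)
    qed
    have "a + s - t \<le> \<alpha>" using hx l1 nt by linarith
    then have sb: "s \<le> (N + 1) * \<alpha>"
      using real_key[OF a0' s0 a0 N0 sNa t0 t2] by simp
    have Ax: "A *v x = x$k *s column k A + A *v y"
    proof -
      have "A *v x = (\<Sum>i\<in>UNIV. y$i *s column i A + (if i = k then x$k *s column k A else 0))"
        unfolding matrix_mult_sum[of A x] by (rule sum.cong) (auto simp: y_def)
      also have "\<dots> = x$k *s column k A + A *v y"
        by (simp add: sum.distrib matrix_mult_sum[of A y])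
      finally show ?thesis .
    qed
    have "a * c \<le> a * norm (column k A)" using cle a0' by (simp add: mult_left_mono)
    also have "\<dots> = norm (x$k *s column k A)" by (simp add: scalar_mult_eq_scaleR a_def)
    also have "\<dots> \<le> norm (A *v x) + norm (A *v y)"
      using Ax norm_triangle_ineq4[of "A *v x" "A *v y"] by simp
    also have "\<dots> \<le> R + B * s"
      using hx Bb[of y] ny Bpos by (smt (verit) mult_left_mono)
    also have "\<dots> \<le> R + B * ((N + 1) * \<alpha>)" using sb Bpos by simp
    finally have "a * c \<le> R + B * ((N + 1) * \<alpha>)" .
    then have "a \<le> (R + B * ((N + 1) * \<alpha>)) / c" using cpos by (simp add: pos_le_divide_eq)
    then show "norm x \<le> K" unfolding K_def using l1ge l1 sb by linarith
  qed
qed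

lemma ln_deriv_gen:
  fixes f :: "'a::real_normed_vector \<Rightarrow> real"
  assumes gamma: "\<gamma> > 0" and f: "(f has_derivative f') (at x)"
  shows "((\<lambda>x. ln (1 + (f x)^2 / \<gamma>^2)) has_derivative
     (\<lambda>h. (2 * f x / (\<gamma>^2 + (f x)^2)) * f' h)) (at x)"
proof -
  have pos: "0 < 1 + (f x)^2 / \<gamma>^2" by (simp add: add_pos_nonneg)
  have pos2: "0 < \<gamma>^2 + (f x)^2" using gamma by (simp add: add_pos_nonneg)
  have g0: "\<gamma> \<noteq> 0" using gamma by simp
  have e: "inverse (1 + (f x)^2 / \<gamma>^2) = \<gamma>^2 / (\<gamma>^2 + (f x)^2)"
    using g0 pos2 by (simp add: field_simps)
  show ?thesis
    apply (rule has_derivative_eq_rhs)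
     apply (auto intro!: derivative_eq_intros f simp: pos g0)[1]
    apply (rule ext)
    using g0 pos2 apply (simp add: e field_simps power2_eq_square)
    apply (subgoal_tac "\<gamma>*(\<gamma>*(\<gamma>*\<gamma>)) + \<gamma>*(\<gamma>*(f x*f x)) = (\<gamma>*\<gamma>)*(\<gamma>*\<gamma>+f x*f x)")
     apply (simp add: divide_eq_eq)
     apply (simp add: algebra_simps)
    apply (simp add: algebra_simps)
    done
qed

lemma lin_deriv0:
  fixes A :: "real^'n^'q"
  shows "((\<lambda>x. (A *v x) $ i) has_derivative (\<lambda>h. (A *v h) $ i)) (at x)"
proof -
  have "bounded_linear (\<lambda>h. (A *v h) $ i)"
    using bounded_linear_compose[OF bounded_linear_vec_nth[of i] matrix_vector_mul_bounded_linear[of A]]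
    by (simp add: o_def)
  then show ?thesis
    by (rule bounded_linear_imp_has_derivative)
qed

lemma lin_deriv:
  fixes A :: "real^'n^'q" and b :: "real^'q"
  shows "((\<lambda>x. (A *v x - b) $ i) has_derivative (\<lambda>h. (A *v h) $ i)) (at x)"
  using lin_deriv0[of A i x] by (auto intro!: derivative_eq_intros)

lemma level_set_sub:
  fixes F :: "real^'n \<Rightarrow> ereal"
  assumes F_def: "\<And>x. F x = ereal (l1norm x - \<mu> * norm x) + indicator_fun {y. g y \<le> 0} x"
    and "F x \<le> ereal \<alpha>"
  shows "g x \<le> (0::real) \<and> l1norm x - \<mu> * norm x \<le> \<alpha>"
proof (cases "g x \<le> 0")
  case True
  then show ?thesis using assms by (simp add: indicator_fun_def)
next
  case False
  then show ?thesis using assms by (simp add: indicator_fun_def)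
qed

theorem mainTheorem17:
  fixes A :: "real^'n^'q" and b :: "real^'q" and \<mu> \<gamma> \<delta> :: real
    and g :: "real^'n \<Rightarrow> real" and F :: "real^'n \<Rightarrow> ereal"
  assumes mu: "0 \<le> \<mu>" "\<mu> \<le> 1"
    and rankA: "rank A = CARD('q)"
    and gamma: "\<gamma> > 0"
    and delta: "0 < \<delta>" "\<delta> < LL2 \<gamma> b"
    and g_def: "\<And>x. g x = LL2 \<gamma> (A *v x - b) - \<delta>"
    and F_def: "\<And>x. F x = ereal (l1norm x - \<mu> * norm x) + indicator_fun {y. g y \<le> 0} x"
  shows "(\<forall>x. g x \<le> 0 \<and> g x = 0 \<longrightarrow>
            (\<exists>G. (g has_derivative (\<lambda>h. G \<bullet> h)) (at x) \<and> G \<noteq> 0))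
       \<and> (\<mu> < 1 \<longrightarrow> level_bounded F)
       \<and> (\<mu> = 1 \<and> (\<forall>j. column j A \<noteq> 0) \<longrightarrow> level_bounded F)"
proof (intro conjI impI allI)
  fix x :: "real^'n"
  assume gx: "g x \<le> 0 \<and> g x = 0"
  define r where "r = A *v x - b"
  define c :: "real^'q" where "c = (\<chi> i. 2 * r $ i / (\<gamma>^2 + (r $ i)^2))"
  have gfun: "g = (\<lambda>x. (\<Sum>i\<in>UNIV. ln (1 + ((A *v x - b) $ i)^2 / \<gamma>^2)) - \<delta>)"
    using g_def by (auto simp: LL2_def)
  have trm: "((\<lambda>x. ln (1 + ((A *v x - b) $ i)^2 / \<gamma>^2)) has_derivative (\<lambda>h. c $ i * (A *v h) $ i)) (at x)" for i
    unfolding c_def r_def vec_lambda_beta by (rule ln_deriv_gen[OF gamma lin_deriv])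
  have "(g has_derivative (\<lambda>h. (\<Sum>i\<in>UNIV. c $ i * (A *v h) $ i) - 0)) (at x)"
    unfolding gfun
    by (intro has_derivative_diff has_derivative_sum has_derivative_const trm)
  moreover have "(\<lambda>h. (\<Sum>i\<in>UNIV. c $ i * (A *v h) $ i) - 0) = (\<lambda>h. (c v* A) \<bullet> h)"
    by (rule ext) (simp only: dot_lmul_matrix, simp add: inner_vec_def)
  ultimately have D: "(g has_derivative (\<lambda>h. (c v* A) \<bullet> h)) (at x)" by simp
  have "r \<noteq> 0"
  proof
    assume "r = 0"
    then have "g x = - \<delta>" using g_def[of x] by (simp add: r_def LL2_def)
    then show False using gx delta by simp
  qed
  then obtain i where ri: "r $ i \<noteq> 0" by (metis vec_eq_iff zero_index)
  have "0 < \<gamma>^2 + (r $ i)^2" using gamma by (simp add: add_pos_nonneg)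
  then have "c $ i \<noteq> 0" using ri by (simp add: c_def)
  then have c0: "c \<noteq> 0" by auto
  have "rank (transpose A) = CARD('q)" using rankA by (simp add: rank_transpose)
  then have "inj ((*v) (transpose A))" by (simp add: full_rank_injective)
  then have "transpose A *v c \<noteq> transpose A *v 0" using c0 by (metis injD)
  then have "c v* A \<noteq> 0" by simp
  then show "\<exists>G. (g has_derivative (\<lambda>h. G \<bullet> h)) (at x) \<and> G \<noteq> 0" using D by blast
next
  assume mu1: "\<mu> < 1"
  show "level_bounded F"
    unfolding level_bounded_def
  proof
    fix \<alpha> :: real
    have "{x. F x \<le> ereal \<alpha>} \<subseteq> cball 0 (\<alpha> / (1 - \<mu>))"
    proof
      fix x assume "x \<in> {x. F x \<le> ereal \<alpha>}"
      then have h: "l1norm x - \<mu> * norm x \<le> \<alpha>" using level_set_sub[OF F_def] by blast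
      have "norm x \<le> l1norm x" unfolding l1norm_def by (rule norm_le_l1_cart)
      then have "(1 - \<mu>) * norm x \<le> \<alpha>" using h by (simp add: algebra_simps)
      then have "norm x \<le> \<alpha> / (1 - \<mu>)" using mu1 by (simp add: pos_le_divide_eq mult.commute)
      then show "x \<in> cball 0 (\<alpha> / (1 - \<mu>))" by simp
    qed
    then show "bounded {x. F x \<le> ereal \<alpha>}" using bounded_cball bounded_subset by blast
  qed
next
  assume h1: "\<mu> = 1 \<and> (\<forall>j. column j A \<noteq> 0)"
  show "level_bounded F"
    unfolding level_bounded_def
  proof
    fix \<alpha> :: real
    define \<rho> where "\<rho> = sqrt (\<gamma>^2 * exp \<delta>)"
    define R where "R = real CARD('q) * \<rho> + norm b"
    obtain K where K: "\<And>x. norm (A *v x) \<le> R \<and> l1norm x - norm x \<le> \<alpha> \<Longrightarrow> norm x \<le> K"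
      using sparse_bound[of A R \<alpha>] h1 by blast
    have "{x. F x \<le> ereal \<alpha>} \<subseteq> cball 0 K"
    proof
      fix x assume "x \<in> {x. F x \<le> ereal \<alpha>}"
      then have h: "g x \<le> 0" "l1norm x - norm x \<le> \<alpha>" using level_set_sub[OF F_def] h1 by auto
      define r where "r = A *v x - b"
      have LL: "(\<Sum>i\<in>UNIV. ln (1 + (r $ i)^2 / \<gamma>^2)) \<le> \<delta>"
        using h(1) g_def[of x] by (simp add: LL2_def r_def)
      have ri: "\<bar>r $ i\<bar> \<le> \<rho>" for i
      proof -
        have nn: "\<And>j. 0 \<le> ln (1 + (r $ j)^2 / \<gamma>^2)" by (simp add: add_pos_nonneg)
        have "ln (1 + (r $ i)^2 / \<gamma>^2) \<le> (\<Sum>i\<in>UNIV. ln (1 + (r $ i)^2 / \<gamma>^2))"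
          by (rule member_le_sum) (auto simp: nn)
        then have "ln (1 + (r $ i)^2 / \<gamma>^2) \<le> \<delta>" using LL by linarith
        then have "exp (ln (1 + (r $ i)^2 / \<gamma>^2)) \<le> exp \<delta>" by simp
        then have "1 + (r $ i)^2 / \<gamma>^2 \<le> exp \<delta>"
          by (simp add: add_pos_nonneg)
        then have "(r $ i)^2 / \<gamma>^2 \<le> exp \<delta>" by linarith
        then have "(r $ i)^2 \<le> \<gamma>^2 * exp \<delta>" using gamma by (simp add: divide_le_eq mult.commute)
        then show ?thesis unfolding \<rho>_def by (intro real_le_rsqrt) simp
      qed
      have "norm r \<le> (\<Sum>i\<in>UNIV. \<bar>r $ i\<bar>)" by (rule norm_le_l1_cart)
      also have "\<dots> \<le> (\<Sum>i\<in>(UNIV::'q set). \<rho>)" by (intro sum_mono ri)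
      finally have nr: "norm r \<le> real CARD('q) * \<rho>" by simp
      have "A *v x = r + b" by (simp add: r_def)
      then have "norm (A *v x) \<le> norm r + norm b" by (simp add: norm_triangle_ineq)
      then have "norm (A *v x) \<le> R" using nr unfolding R_def by linarith
      then have "norm x \<le> K" using K h(2) by blast
      then show "x \<in> cball 0 K" by simp
    qed
    then show "bounded {x. F x \<le> ereal \<alpha>}" using bounded_cball bounded_subset by blast
  qed
qed

end
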